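(* Let $d,N\ge1$ and $P\in\{0,\dots,d-1\}$. Let $\mathcal H_N^{(P)}$ be the subspace of the bosonic $N$-particle space $\mathrm{Sym}^N(\mathbb C^d)$ spanned by the permanents $|m_0,\dots,m_{d-1}\rangle$ with $\sum_k m_k=N$ and $\sum_{k=0}^{d-1}k\,m_k\equiv P\pmod d$, and let $W$ be any Hermitian operator on $\mathcal H_N^{(P)}$. Define, for $m\in\mathbb R^d$, $$\mathcal F_p^{(P)}(m)=\min\{\langle\Psi|W|\Psi\rangle:\Psi\in\mathcal H_N^{(P)},\|\Psi\|=1,\langle\Psi|n_k|\Psi\rangle=m_k\ \forall k\},\qquad \mathcal F_e^{(P)}(m)=\min\{\mathrm{Tr}(\Gamma W):\Gamma\text{ density operator on }\mathcal H_N^{(P)},\ \mathrm{Tr}(\Gamma n_k)=m_k\ \forall k\},$$ with domain the set of $m$ for which the respective constraint set is nonempty. Then the domains of $\mathcal F_p^{(P)}$ and $\mathcal F_e^{(P)}$ coincide and both equal $$\mathrm{conv}\Big\{m\in\mathbb N_0^d:\ \sum_{k=0}^{d-1}m_k=N,\ \sum_{k=0}^{d-1}k\,m_k\equiv P\pmod d\Big\}.$$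
   Context: $b_k^\dagger,b_k$ are bosonic creation/annihilation operators for momentum mode $k\in\{0,\dots,d-1\}$ on a $d$-site periodic lattice, $n_k=b_k^\dagger b_k$ is the momentum-space number operator, and $|m_0,\dots,m_{d-1}\rangle\propto\prod_k(b_k^\dagger)^{m_k}|\mathrm{vac}\rangle$ is the normalized permanent with $m_k$ bosons in momentum $k$. *)

theory Defs
  imports "HOL-Analysis.Analysis"
begin

text \<open>These label the orthonormal permanent basis of H_N^(P).\<close>
definition configs :: "nat \<Rightarrow> nat \<Rightarrow> nat \<Rightarrow> (nat \<Rightarrow> nat) set" where
  "configs d N P = {m. (\<forall>k\<ge>d. m k = 0) \<and> (\<Sum>k<d. m k) = N \<and> (\<Sum>k<d. k * m k) mod d = P}"

text \<open>Matrix of the number operator n_k = b_k^dagger b_k in the permanent basis.\<close>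
definition numop :: "nat \<Rightarrow> (nat \<Rightarrow> nat) \<Rightarrow> (nat \<Rightarrow> nat) \<Rightarrow> complex" where
  "numop k a b = (if a = b then of_nat (a k) else 0)"

text \<open>Pure states: coefficient vectors Psi over the basis configs d N P.\<close>
definition norm_sq :: "(nat \<Rightarrow> nat) set \<Rightarrow> ((nat \<Rightarrow> nat) \<Rightarrow> complex) \<Rightarrow> real" where
  "norm_sq B \<Psi> = (\<Sum>a\<in>B. (cmod (\<Psi> a))\<^sup>2)"

definition expect :: "(nat \<Rightarrow> nat) set \<Rightarrow> ((nat \<Rightarrow> nat) \<Rightarrow> (nat \<Rightarrow> nat) \<Rightarrow> complex)
    \<Rightarrow> ((nat \<Rightarrow> nat) \<Rightarrow> complex) \<Rightarrow> complex" where
  "expect B A \<Psi> = (\<Sum>a\<in>B. \<Sum>b\<in>B. cnj (\<Psi> a) * A a b * \<Psi> b)"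

definition density_op :: "(nat \<Rightarrow> nat) set \<Rightarrow> ((nat \<Rightarrow> nat) \<Rightarrow> (nat \<Rightarrow> nat) \<Rightarrow> complex) \<Rightarrow> bool" where
  "density_op B \<Gamma> \<longleftrightarrow>
     (\<forall>a\<in>B. \<forall>b\<in>B. \<Gamma> a b = cnj (\<Gamma> b a)) \<and>
     (\<forall>v :: (nat \<Rightarrow> nat) \<Rightarrow> complex. 0 \<le> Re (expect B \<Gamma> v)) \<and>
     (\<Sum>a\<in>B. \<Gamma> a a) = 1"

definition trace_prod :: "(nat \<Rightarrow> nat) set \<Rightarrow> ((nat \<Rightarrow> nat) \<Rightarrow> (nat \<Rightarrow> nat) \<Rightarrow> complex)
    \<Rightarrow> ((nat \<Rightarrow> nat) \<Rightarrow> (nat \<Rightarrow> nat) \<Rightarrow> complex) \<Rightarrow> complex" where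
  "trace_prod B X Y = (\<Sum>a\<in>B. \<Sum>b\<in>B. X a b * Y b a)"

definition dom_pure :: "nat \<Rightarrow> nat \<Rightarrow> nat \<Rightarrow> (nat \<Rightarrow> real) set" where
  "dom_pure d N P = {m. (\<forall>k\<ge>d. m k = 0) \<and>
     (\<exists>\<Psi>. norm_sq (configs d N P) \<Psi> = 1 \<and>
          (\<forall>k<d. expect (configs d N P) (numop k) \<Psi> = complex_of_real (m k)))}"

definition dom_ens :: "nat \<Rightarrow> nat \<Rightarrow> nat \<Rightarrow> (nat \<Rightarrow> real) set" where
  "dom_ens d N P = {m. (\<forall>k\<ge>d. m k = 0) \<and>
     (\<exists>\<Gamma>. density_op (configs d N P) \<Gamma> \<and>
          (\<forall>k<d. trace_prod (configs d N P) \<Gamma> (numop k) = complex_of_real (m k)))}"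

text \<open>Convex hull of a set of points of nat => real (this function type has no
  real_vector instance in the library), written out as the set of finite convex
  combinations, i.e. the literal content of the convex hull.\<close>
definition conv_hull :: "(nat \<Rightarrow> real) set \<Rightarrow> (nat \<Rightarrow> real) set" where
  "conv_hull S = {x. \<exists>F u. finite F \<and> F \<noteq> {} \<and> F \<subseteq> S \<and> (\<forall>y\<in>F. 0 \<le> u y) \<and>
      sum u F = 1 \<and> x = (\<lambda>k. \<Sum>y\<in>F. u y * y k)}"

end

theory Submission
  imports Defs
begin

lemma configs_finite: "finite (configs d N P)"
proof -
  let ?f = "\<lambda>m::nat\<Rightarrow>nat. map m [0..<d]"
  have inj: "inj_on ?f (configs d N P)"
  proof (rule inj_onI)
    fix x y assume x: "x \<in> configs d N P" and y: "y \<in> configs d N P" and e: "?f x = ?f y"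
    show "x = y"
    proof
      fix k show "x k = y k"
      proof (cases "k < d")
        case True then show ?thesis using e by (metis (no_types, lifting) map_eq_conv atLeastLessThan_iff le0 set_upt)
      next
        case False then show ?thesis using x y by (simp add: configs_def)
      qed
    qed
  qed
  have sub: "?f ` configs d N P \<subseteq> {xs. set xs \<subseteq> {0..N} \<and> length xs = d}"
  proof
    fix xs assume "xs \<in> ?f ` configs d N P"
    then obtain m where m: "m \<in> configs d N P" and xs: "xs = ?f m" by blast
    have "\<forall>k<d. m k \<le> N"
    proof (intro allI impI)
      fix k assume "k < d"
      then have "m k \<le> (\<Sum>j<d. m j)" by (intro member_le_sum) auto
      then show "m k \<le> N" using m by (simp add: configs_def)
    qed
    then show "xs \<in> {xs. set xs \<subseteq> {0..N} \<and> length xs = d}" using xs by auto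
  qed
  have "finite {xs. set xs \<subseteq> {0..N} \<and> length xs = d}"
    by (rule finite_lists_length_eq) simp
  then have "finite (?f ` configs d N P)" using sub finite_subset by blast
  then show ?thesis using inj finite_image_iff by blast
qed

lemma expect_numop:
  assumes "finite B"
  shows "expect B (numop k) \<Psi> = complex_of_real (\<Sum>a\<in>B. (cmod (\<Psi> a))\<^sup>2 * real (a k))"
proof -
  have "expect B (numop k) \<Psi> = (\<Sum>a\<in>B. cnj (\<Psi> a) * of_nat (a k) * \<Psi> a)"
    unfolding expect_def numop_def
  proof (rule sum.cong[OF refl])
    fix a assume "a \<in> B"
    have "(\<Sum>b\<in>B. cnj (\<Psi> a) * (if a = b then of_nat (a k) else 0) * \<Psi> b) =
          (\<Sum>b\<in>B. if b = a then cnj (\<Psi> a) * of_nat (a k) * \<Psi> a else 0)"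
      by (rule sum.cong) auto
    also have "\<dots> = cnj (\<Psi> a) * of_nat (a k) * \<Psi> a"
      using assms \<open>a \<in> B\<close> by simp
    finally show "(\<Sum>b\<in>B. cnj (\<Psi> a) * (if a = b then of_nat (a k) else 0) * \<Psi> b) =
          cnj (\<Psi> a) * of_nat (a k) * \<Psi> a" .
  qed
  also have "\<dots> = (\<Sum>a\<in>B. complex_of_real ((cmod (\<Psi> a))\<^sup>2 * real (a k)))"
  proof (rule sum.cong[OF refl])
    fix a
    have "cnj (\<Psi> a) * \<Psi> a = complex_of_real ((cmod (\<Psi> a))\<^sup>2)"
      by (metis complex_norm_square mult.commute)
    then show "cnj (\<Psi> a) * of_nat (a k) * \<Psi> a = complex_of_real ((cmod (\<Psi> a))\<^sup>2 * real (a k))"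
      by (metis (no_types, lifting) mult.commute mult.left_commute of_real_mult of_real_of_nat_eq)
  qed
  also have "\<dots> = complex_of_real (\<Sum>a\<in>B. (cmod (\<Psi> a))\<^sup>2 * real (a k))"
    by simp
  finally show ?thesis .
qed

lemma trace_numop:
  assumes "finite B"
  shows "trace_prod B \<Gamma> (numop k) = (\<Sum>a\<in>B. \<Gamma> a a * of_nat (a k))"
  unfolding trace_prod_def numop_def
proof (rule sum.cong[OF refl])
  fix a assume "a \<in> B"
  then show "(\<Sum>b\<in>B. \<Gamma> a b * (if b = a then of_nat (b k) else 0)) = \<Gamma> a a * of_nat (a k)"
    using assms by (simp add: if_distrib cong: if_cong)
qed

definition Wset :: "nat \<Rightarrow> (nat \<Rightarrow> nat) set \<Rightarrow> (nat \<Rightarrow> real) set" where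
  "Wset d B = {m. (\<forall>k\<ge>d. m k = 0) \<and> (\<exists>w. (\<forall>a\<in>B. 0 \<le> w a) \<and> sum w B = 1 \<and>
      (\<forall>k<d. m k = (\<Sum>a\<in>B. w a * real (a k))))}"

lemma pure_eq: "dom_pure d N P = Wset d (configs d N P)"
proof -
  let ?B = "configs d N P"
  have fin: "finite ?B" by (rule configs_finite)
  show ?thesis
  proof (intro set_eqI iffI)
    fix m assume "m \<in> dom_pure d N P"
    then obtain \<Psi> where z: "\<forall>k\<ge>d. m k = 0" and n: "norm_sq ?B \<Psi> = 1"
      and e: "\<forall>k<d. expect ?B (numop k) \<Psi> = complex_of_real (m k)"
      unfolding dom_pure_def by blast
    have "\<forall>k<d. m k = (\<Sum>a\<in>?B. (cmod (\<Psi> a))\<^sup>2 * real (a k))"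
    proof (intro allI impI)
      fix k assume "k < d"
      then have "complex_of_real (\<Sum>a\<in>?B. (cmod (\<Psi> a))\<^sup>2 * real (a k)) = complex_of_real (m k)"
        using e expect_numop[OF fin] by metis
      then show "m k = (\<Sum>a\<in>?B. (cmod (\<Psi> a))\<^sup>2 * real (a k))" by (simp only: of_real_eq_iff)
    qed
    then show "m \<in> Wset d ?B" unfolding Wset_def using z n
      by (intro CollectI conjI exI[of _ "\<lambda>a. (cmod (\<Psi> a))\<^sup>2"]) (auto simp: norm_sq_def)
  next
    fix m assume "m \<in> Wset d ?B"
    then obtain w where z: "\<forall>k\<ge>d. m k = 0" and w0: "\<forall>a\<in>?B. 0 \<le> w a" and w1: "sum w ?B = 1"
      and e: "\<forall>k<d. m k = (\<Sum>a\<in>?B. w a * real (a k))"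
      unfolding Wset_def by blast
    let ?\<Psi> = "\<lambda>a. complex_of_real (sqrt (w a))"
    have sq: "(cmod (?\<Psi> a))\<^sup>2 = w a" if "a \<in> ?B" for a
      using w0 that by simp
    have "norm_sq ?B ?\<Psi> = 1" unfolding norm_sq_def using sq w1 by (simp cong: sum.cong)
    moreover have "\<forall>k<d. expect ?B (numop k) ?\<Psi> = complex_of_real (m k)"
      using e sq by (simp add: expect_numop[OF fin] cong: sum.cong)
    ultimately show "m \<in> dom_pure d N P" unfolding dom_pure_def using z by blast
  qed
qed

lemma ens_eq: "dom_ens d N P = Wset d (configs d N P)"
proof -
  let ?B = "configs d N P"
  have fin: "finite ?B" by (rule configs_finite)
  show ?thesis
  proof (intro set_eqI iffI)
    fix m assume "m \<in> dom_ens d N P"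
    then obtain \<Gamma> where z: "\<forall>k\<ge>d. m k = 0" and D: "density_op ?B \<Gamma>"
      and e: "\<forall>k<d. trace_prod ?B \<Gamma> (numop k) = complex_of_real (m k)"
      unfolding dom_ens_def by blast
    have herm: "\<forall>a\<in>?B. \<Gamma> a a = cnj (\<Gamma> a a)" using D unfolding density_op_def by blast
    have real: "\<Gamma> a a = complex_of_real (Re (\<Gamma> a a))" if "a \<in> ?B" for a
    proof -
      have "Im (\<Gamma> a a) = 0" using herm that by (metis cnj.sel(2) neg_equal_zero)
      then show ?thesis by (simp add: complex_eq_iff)
    qed
    have pos: "0 \<le> Re (\<Gamma> a a)" if "a \<in> ?B" for a
    proof -
      let ?v = "\<lambda>x. if x = a then (1::complex) else 0"
      have "0 \<le> Re (expect ?B \<Gamma> ?v)"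
        using D unfolding density_op_def by blast
      moreover have "expect ?B \<Gamma> ?v = \<Gamma> a a"
      proof -
        have "expect ?B \<Gamma> ?v = (\<Sum>x\<in>?B. if x = a then (\<Sum>y\<in>?B. \<Gamma> a y * ?v y) else 0)"
          unfolding expect_def by (rule sum.cong) auto
        also have "\<dots> = (\<Sum>y\<in>?B. \<Gamma> a y * ?v y)" using fin that by simp
        also have "\<dots> = (\<Sum>y\<in>?B. if y = a then \<Gamma> a a else 0)" by (rule sum.cong) auto
        also have "\<dots> = \<Gamma> a a" using fin that by simp
        finally show ?thesis .
      qed
      ultimately show ?thesis by simp
    qed
    have tr: "(\<Sum>a\<in>?B. \<Gamma> a a) = 1" using D unfolding density_op_def by blast
    have "(\<Sum>a\<in>?B. \<Gamma> a a) = (\<Sum>a\<in>?B. complex_of_real (Re (\<Gamma> a a)))"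
      using real by (rule sum.cong[OF refl])
    also have "\<dots> = complex_of_real (\<Sum>a\<in>?B. Re (\<Gamma> a a))" by (rule of_real_sum[symmetric])
    finally have "complex_of_real (\<Sum>a\<in>?B. Re (\<Gamma> a a)) = 1" using tr by simp
    then have s1: "(\<Sum>a\<in>?B. Re (\<Gamma> a a)) = 1" by (metis of_real_eq_1_iff)
    have "\<forall>k<d. m k = (\<Sum>a\<in>?B. Re (\<Gamma> a a) * real (a k))"
    proof (intro allI impI)
      fix k assume "k < d"
      then have "complex_of_real (m k) = (\<Sum>a\<in>?B. \<Gamma> a a * of_nat (a k))"
        using e trace_numop[OF fin] by metis
      also have "\<dots> = (\<Sum>a\<in>?B. complex_of_real (Re (\<Gamma> a a) * real (a k)))"
      proof (rule sum.cong[OF refl])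
        fix a assume "a \<in> ?B"
        then show "\<Gamma> a a * of_nat (a k) = complex_of_real (Re (\<Gamma> a a) * real (a k))"
          using real by (metis of_real_mult of_real_of_nat_eq)
      qed
      also have "\<dots> = complex_of_real (\<Sum>a\<in>?B. Re (\<Gamma> a a) * real (a k))"
        by (rule of_real_sum[symmetric])
      finally show "m k = (\<Sum>a\<in>?B. Re (\<Gamma> a a) * real (a k))" by (simp only: of_real_eq_iff)
    qed
    then show "m \<in> Wset d ?B" unfolding Wset_def using z s1 pos
      by (intro CollectI conjI exI[of _ "\<lambda>a. Re (\<Gamma> a a)"]) auto
  next
    fix m assume "m \<in> Wset d ?B"
    then obtain w where z: "\<forall>k\<ge>d. m k = 0" and w0: "\<forall>a\<in>?B. 0 \<le> w a" and w1: "sum w ?B = 1"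
      and e: "\<forall>k<d. m k = (\<Sum>a\<in>?B. w a * real (a k))"
      unfolding Wset_def by blast
    define G where "G = (\<lambda>a b. if a = b then complex_of_real (w a) else 0)"
    have pos: "0 \<le> Re (expect ?B G v)" for v
    proof -
      have "expect ?B G v = (\<Sum>a\<in>?B. \<Sum>b\<in>?B. if b = a then cnj (v a) * complex_of_real (w a) * v a else 0)"
        unfolding expect_def G_def by (intro sum.cong refl) auto
      also have "\<dots> = (\<Sum>a\<in>?B. cnj (v a) * complex_of_real (w a) * v a)"
        using fin by (intro sum.cong refl) simp
      also have "\<dots> = (\<Sum>a\<in>?B. complex_of_real (w a * (cmod (v a))\<^sup>2))"
      proof (rule sum.cong[OF refl])
        fix a
        have "cnj (v a) * v a = complex_of_real ((cmod (v a))\<^sup>2)"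
          by (metis complex_norm_square mult.commute)
        then show "cnj (v a) * complex_of_real (w a) * v a = complex_of_real (w a * (cmod (v a))\<^sup>2)"
          by (metis (no_types, lifting) mult.commute mult.left_commute of_real_mult)
      qed
      also have "\<dots> = complex_of_real (\<Sum>a\<in>?B. w a * (cmod (v a))\<^sup>2)"
        by (rule of_real_sum[symmetric])
      finally have "Re (expect ?B G v) = (\<Sum>a\<in>?B. w a * (cmod (v a))\<^sup>2)" by simp
      also have "0 \<le> \<dots>" using w0 by (intro sum_nonneg) simp
      finally show ?thesis by simp
    qed
    have herm: "\<forall>a\<in>?B. \<forall>b\<in>?B. G a b = cnj (G b a)" unfolding G_def by simp
    have "(\<Sum>a\<in>?B. G a a) = (\<Sum>a\<in>?B. complex_of_real (w a))" unfolding G_def by simp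
    also have "\<dots> = 1" using w1 by (metis of_real_1 of_real_sum)
    finally have "(\<Sum>a\<in>?B. G a a) = 1" .
    then have "density_op ?B G" unfolding density_op_def using herm pos by blast
    moreover have "\<forall>k<d. trace_prod ?B G (numop k) = complex_of_real (m k)"
    proof (intro allI impI)
      fix k assume "k < d"
      have "trace_prod ?B G (numop k) = (\<Sum>a\<in>?B. complex_of_real (w a * real (a k)))"
        unfolding trace_numop[OF fin] G_def by simp
      also have "\<dots> = complex_of_real (m k)" using e \<open>k < d\<close> by (metis of_real_sum)
      finally show "trace_prod ?B G (numop k) = complex_of_real (m k)" .
    qed
    ultimately show "m \<in> dom_ens d N P" unfolding dom_ens_def using z by blast
  qed
qed

lemma hull_eq:
  assumes fin: "finite B" and van: "\<forall>a\<in>B. \<forall>k\<ge>d. a k = 0"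
  shows "Wset d B = conv_hull ((\<lambda>m k. real (m k)) ` B)"
proof -
  let ?img = "\<lambda>(m::nat\<Rightarrow>nat) k. real (m k)"
  have inj: "inj ?img"
  proof (rule injI)
    fix x y :: "nat \<Rightarrow> nat" assume "?img x = ?img y"
    then have "\<And>k. real (x k) = real (y k)" by metis
    then show "x = y" by auto
  qed
  show ?thesis
  proof (intro set_eqI iffI)
    fix m assume "m \<in> Wset d B"
    then obtain w where z: "\<forall>k\<ge>d. m k = 0" and w0: "\<forall>a\<in>B. 0 \<le> w a" and w1: "sum w B = 1"
      and e: "\<forall>k<d. m k = (\<Sum>a\<in>B. w a * real (a k))"
      unfolding Wset_def by blast
    let ?u = "\<lambda>y. w (inv ?img y)"
    have inv: "inv ?img (?img a) = a" for a by (rule inv_f_f[OF inj])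
    have ne: "B \<noteq> {}" using w1 by auto
    have s1: "sum ?u (?img ` B) = 1"
      using w1 by (subst sum.reindex) (auto intro: inj_on_subset[OF inj] simp: inv)
    have mk: "m = (\<lambda>k. \<Sum>y\<in>?img ` B. ?u y * y k)"
    proof
      fix k
      have r: "(\<Sum>y\<in>?img ` B. ?u y * y k) = (\<Sum>a\<in>B. w a * real (a k))"
        by (subst sum.reindex) (auto intro: inj_on_subset[OF inj] simp: inv)
      show "m k = (\<Sum>y\<in>?img ` B. ?u y * y k)"
      proof (cases "k < d")
        case True then show ?thesis using e r by simp
      next
        case False
        then have "\<forall>a\<in>B. w a * real (a k) = 0" using van by simp
        then have "(\<Sum>a\<in>B. w a * real (a k)) = 0" by (rule sum.neutral)
        then show ?thesis using z r False by simp
      qed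
    qed
    show "m \<in> conv_hull (?img ` B)" unfolding conv_hull_def
      using fin ne w0 s1 mk
      by (intro CollectI exI[of _ "?img ` B"] exI[of _ ?u]) (auto simp: inv)
  next
    fix m assume "m \<in> conv_hull (?img ` B)"
    then obtain F u where fF: "finite F" and Fne: "F \<noteq> {}" and FB: "F \<subseteq> ?img ` B"
      and u0: "\<forall>y\<in>F. 0 \<le> u y" and u1: "sum u F = 1" and mk: "m = (\<lambda>k. \<Sum>y\<in>F. u y * y k)"
      unfolding conv_hull_def by blast
    define C where "C = {a\<in>B. ?img a \<in> F}"
    have CF: "?img ` C = F" using FB unfolding C_def by auto
    have injC: "inj_on ?img C" using inj_on_subset[OF inj] by blast
    have CB: "C \<subseteq> B" unfolding C_def by blast
    let ?w = "\<lambda>a. if a \<in> C then u (?img a) else 0"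
    have sw: "sum ?w B = sum (\<lambda>a. u (?img a)) C"
    proof -
      have "sum ?w B = sum ?w C" by (rule sum.mono_neutral_right[OF fin CB]) auto
      also have "\<dots> = sum (\<lambda>a. u (?img a)) C" by (rule sum.cong) auto
      finally show ?thesis .
    qed
    have sw2: "(\<Sum>a\<in>B. ?w a * real (a k)) = (\<Sum>a\<in>C. u (?img a) * real (a k))" for k
    proof -
      have "(\<Sum>a\<in>B. ?w a * real (a k)) = (\<Sum>a\<in>C. ?w a * real (a k))"
        by (rule sum.mono_neutral_right[OF fin CB]) auto
      also have "\<dots> = (\<Sum>a\<in>C. u (?img a) * real (a k))" by (rule sum.cong) auto
      finally show ?thesis .
    qed
    have r1: "sum (\<lambda>a. u (?img a)) C = sum u F"
      using sum.reindex[OF injC, of u] CF by simp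
    have r2: "(\<Sum>a\<in>C. u (?img a) * real (a k)) = (\<Sum>y\<in>F. u y * y k)" for k
      using sum.reindex[OF injC, of "\<lambda>y. u y * y k"] CF by simp
    have z: "\<forall>k\<ge>d. m k = 0"
    proof (intro allI impI)
      fix k assume "d \<le> k"
      have "\<forall>a\<in>C. u (?img a) * real (a k) = 0" using van CB \<open>d \<le> k\<close> by (metis mult_zero_right of_nat_0 subsetD)
      then have "(\<Sum>a\<in>C. u (?img a) * real (a k)) = 0" by (rule sum.neutral)
      then show "m k = 0" using r2 mk by simp
    qed
    have w0: "\<forall>a\<in>B. 0 \<le> ?w a" using u0 unfolding C_def by auto
    show "m \<in> Wset d B" unfolding Wset_def
      using z w0 sw r1 u1 sw2 r2 mk
      by (intro CollectI conjI exI[of _ ?w]) auto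
  qed
qed

theorem theorem3p2:
  fixes d N P :: nat
  assumes "1 \<le> d" and "1 \<le> N" and "P < d"
  shows "dom_pure d N P = dom_ens d N P \<and>
         dom_ens d N P = conv_hull ((\<lambda>m k. real (m k)) ` configs d N P)"
  using pure_eq ens_eq hull_eq[OF configs_finite, of d N P d]
  by (simp add: configs_def)

end
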